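(* Let $\Sigma\in\mathbb{R}^{n\times n}$ be a symmetric positive definite matrix with eigenvalues $\lambda_1,\ldots,\lambda_n$, $\lambda_{\min}=\min_i\lambda_i$, $\lambda_{\mathrm{mean}}=\mathrm{tr}(\Sigma)/n$. For $0<D\le\mathrm{tr}(\Sigma)$ let $L>0$ satisfy $\sum_{i=1}^n\min\{L,\lambda_i\}=D$, $D_i=\min\{L,\lambda_i\}$, and $R(D)=\sum_{i=1}^n\frac12\log\frac{\lambda_i}{D_i}$. For $\alpha\in[0,1]$, $D>0$ let $R_\alpha(D)=\frac12\log\det\big(\alpha I+\frac{n}{D}\Sigma\big)$, and let $\alpha^*\in[0,1]$ be the unique value with $R_{\alpha^*}(\mathrm{tr}(\Sigma))=0$. Then $\lim_{D\to0^+}\big(R_{\alpha^*}(D)-R(D)\big)=0$, $R_{\alpha^*}(\mathrm{tr}(\Sigma))=R(\mathrm{tr}(\Sigma))=0$, and for every $D\in(0,\mathrm{tr}(\Sigma)]$, $$\frac12\log\frac{\lambda_{\min}}{\lambda_{\mathrm{mean}}}\le\frac{R_{\alpha^*}(D)-R(D)}{n}\le\frac12\log\Big(2-\frac{\lambda_{\min}}{\lambda_{\mathrm{mean}}}\Big).$$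
   Context: $\log$ denotes the logarithm to a fixed base greater than $1$. $R(D)$ is the mean-square-distortion rate-distortion function of an $n$-dimensional Gaussian vector with covariance $\Sigma$ (reverse water-filling); $I$ is the $n\times n$ identity matrix. *)

theory Defs
  imports "HOL-Analysis.Analysis"
begin

definition spd :: "real^'n^'n \<Rightarrow> bool" where
  "spd S \<longleftrightarrow> transpose S = S \<and> (\<forall>x. x \<noteq> 0 \<longrightarrow> x \<bullet> (S *v x) > 0)"

definition eigenvalues_of :: "real^'n^'n \<Rightarrow> ('n \<Rightarrow> real) \<Rightarrow> bool" where
  "eigenvalues_of S lam \<longleftrightarrow>
     (\<forall>x. det (x *\<^sub>R mat 1 - S) = (\<Prod>i\<in>UNIV. x - lam i))"

definition water_level :: "('n::finite \<Rightarrow> real) \<Rightarrow> real \<Rightarrow> real" where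
  "water_level lam D = (SOME L. L > 0 \<and> (\<Sum>i\<in>UNIV. min L (lam i)) = D)"

definition RD :: "real \<Rightarrow> ('n::finite \<Rightarrow> real) \<Rightarrow> real \<Rightarrow> real" where
  "RD b lam D = (\<Sum>i\<in>UNIV. 1/2 * log b (lam i / min (water_level lam D) (lam i)))"

definition R_alpha :: "real \<Rightarrow> real^'n^'n \<Rightarrow> real \<Rightarrow> real \<Rightarrow> real" where
  "R_alpha b S \<alpha> D = 1/2 * log b (det (\<alpha> *\<^sub>R mat 1 + (real CARD('n) / D) *\<^sub>R S))"

definition alpha_star :: "real \<Rightarrow> real^'n^'n \<Rightarrow> real" where
  "alpha_star b S = (THE \<alpha>. \<alpha> \<in> {0..1} \<and> R_alpha b S \<alpha> (trace S) = 0)"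

end

theory Submission
  imports Defs
begin

lemma det_scaleR_gen: "det (c *\<^sub>R (A::real^'n^'n)) = c ^ CARD('n) * det A"
  unfolding det_def
  by (simp add: sum_distrib_left prod.distrib mult_ac)

lemma eig_pos:
  assumes "spd S" "eigenvalues_of S lam"
  shows "lam i > 0"
proof -
  have "det (lam i *\<^sub>R mat 1 - S) = 0"
    using assms(2) unfolding eigenvalues_of_def
    by (metis (no_types, lifting) UNIV_I diff_self finite prod_zero_iff)
  then have "rank (lam i *\<^sub>R mat 1 - S) \<noteq> CARD('a)"
    by (simp add: det_eq_0_rank)
  then obtain x where x: "x \<noteq> 0" "(lam i *\<^sub>R mat 1 - S) *v x = 0"
    using matrix_nonfull_linear_equations_eq by blast
  then have "S *v x = lam i *\<^sub>R x"
    by (simp add: algebra_simps flip: scaleR_matrix_vector_assoc)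
  moreover have "x \<bullet> (S *v x) > 0" using assms(1) x(1) unfolding spd_def by blast
  ultimately have "lam i * (x \<bullet> x) > 0" by simp
  moreover have "x \<bullet> x > 0" using x(1) by simp
  ultimately show ?thesis by (simp add: zero_less_mult_iff)
qed

lemma det_shift:
  assumes "eigenvalues_of S lam" "c \<noteq> 0"
  shows "det (\<alpha> *\<^sub>R mat 1 + c *\<^sub>R S) = (\<Prod>i\<in>UNIV. \<alpha> + c * lam i)"
proof -
  have "\<alpha> *\<^sub>R mat 1 + c *\<^sub>R S = (- c) *\<^sub>R ((- \<alpha> / c) *\<^sub>R mat 1 - S)"
    using assms(2) by (simp add: algebra_simps)
  then have "det (\<alpha> *\<^sub>R mat 1 + c *\<^sub>R S) = (-c) ^ CARD('a) * (\<Prod>i\<in>UNIV. - \<alpha> / c - lam i)"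
    using assms(1) det_scaleR_gen[of "- c" "(- \<alpha> / c) *\<^sub>R mat 1 - S"]
    unfolding eigenvalues_of_def by metis
  also have "\<dots> = (\<Prod>i\<in>UNIV. (-c) * (- \<alpha> / c - lam i))"
    by (simp only: prod.distrib prod_constant)
  also have "\<dots> = (\<Prod>i\<in>UNIV. \<alpha> + c * lam i)"
    using assms(2) by (simp add: algebra_simps)
  finally show ?thesis .
qed


lemma perm_term:
  assumes p: "p permutes (UNIV::'n::finite set)"
  shows "(\<Sum>k\<in>UNIV. (S::real^'n^'n)$k$(p k) * (\<Prod>i\<in>UNIV-{k}. (if i = p i then 1 else 0::real)))
         = (if p = id then trace S else 0)"
proof (cases "p = id")
  case True
  then show ?thesis by (simp add: trace_def)
next
  case False
  have z: "(\<Prod>i\<in>UNIV-{k}. (if i = p i then 1 else 0::real)) = 0" for k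
  proof -
    obtain j where j: "p j \<noteq> j" using False by (metis eq_id_iff)
    have "\<exists>i. i \<noteq> k \<and> p i \<noteq> i"
    proof (cases "j = k")
      case True
      have "p (p j) \<noteq> p j"
      proof
        assume "p (p j) = p j"
        then have "p j = j" using permutes_inj[OF p] by (metis injD)
        with j show False by simp
      qed
      then show ?thesis using True j by metis
    next
      case False
      then show ?thesis using j by metis
    qed
    then obtain i where "i \<noteq> k" "p i \<noteq> i" by blast
    then show ?thesis
      by (intro prod_zero) (auto intro!: bexI[of _ i])
  qed
  have "(\<Sum>k\<in>UNIV. (S::real^'n^'n)$k$(p k) * (\<Prod>i\<in>UNIV-{k}. (if i = p i then 1 else 0::real))) = 0"
    by (rule sum.neutral) (metis z mult_zero_right)
  then show ?thesis using False by simp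
qed

lemma trace_eig:
  assumes "eigenvalues_of (S::real^'n^'n) lam"
  shows "trace S = (\<Sum>i\<in>UNIV. lam i)"
proof -
  define F where "F t = det (mat 1 + t *\<^sub>R S)" for t
  define G where "G t = (\<Prod>i\<in>UNIV. 1 + t * lam i)" for t
  have FG: "F = G"
  proof
    fix t show "F t = G t"
    proof (cases "t = 0")
      case True then show ?thesis by (simp add: F_def G_def)
    next
      case False
      then show ?thesis using det_shift[OF assms False, of 1] by (simp add: F_def G_def)
    qed
  qed
  have "(G has_field_derivative (\<Sum>k\<in>UNIV. lam k * (\<Prod>y\<in>UNIV-{k}. 1 + 0 * lam y))) (at 0)"
    unfolding G_def
    by (rule has_field_derivative_prod) (auto intro!: derivative_eq_intros)
  then have dG: "(G has_field_derivative (\<Sum>k\<in>UNIV. lam k)) (at 0)" by simp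
  define e where "e p i u = (if i = p i then 1 else 0) + u * S$i$(p i)" for p :: "'n \<Rightarrow> 'n" and i u
  have Fe: "F = (\<lambda>t. \<Sum>p\<in>{p. p permutes UNIV}. of_int (sign p) * (\<Prod>i\<in>UNIV. e p i t))"
    by (auto simp: F_def det_def e_def mat_def fun_eq_iff intro!: sum.cong prod.cong)
  have dP: "((\<lambda>t. \<Prod>i\<in>UNIV. e p i t) has_field_derivative
      (\<Sum>k\<in>UNIV. S$k$(p k) * (\<Prod>i\<in>UNIV-{k}. e p i 0))) (at 0)" for p
    by (rule has_field_derivative_prod) (auto simp: e_def intro!: derivative_eq_intros)
  have "(F has_field_derivative (\<Sum>p\<in>{p. p permutes UNIV}. of_int (sign p) *
      (\<Sum>k\<in>UNIV. S$k$(p k) * (\<Prod>i\<in>UNIV-{k}. e p i 0)))) (at 0)"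
    unfolding Fe by (intro DERIV_sum DERIV_cmult dP)
  moreover have "(\<Sum>p\<in>{p. p permutes UNIV}. of_int (sign p) *
      (\<Sum>k\<in>UNIV. S$k$(p k) * (\<Prod>i\<in>UNIV-{k}. e p i 0))) = trace S"
  proof -
    have "(\<Sum>p\<in>{p. p permutes UNIV}. of_int (sign p) *
      (\<Sum>k\<in>UNIV. S$k$(p k) * (\<Prod>i\<in>UNIV-{k}. e p i 0)))
      = (\<Sum>p\<in>{p. p permutes (UNIV::'n set)}. if p = id then trace S else 0)"
    proof (rule sum.cong)
      fix p :: "'n \<Rightarrow> 'n" assume "p \<in> {p. p permutes UNIV}"
      then have p: "p permutes UNIV" by simp
      have "(\<Sum>k\<in>UNIV. S$k$(p k) * (\<Prod>i\<in>UNIV-{k}. e p i 0)) = (if p = id then trace S else 0)"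
        using perm_term[OF p, of S] by (simp add: e_def)
      then show "of_int (sign p) * (\<Sum>k\<in>UNIV. S$k$(p k) * (\<Prod>i\<in>UNIV-{k}. e p i 0))
          = (if p = id then trace S else 0)"
        by (simp add: sign_id)
    qed simp
    also have "\<dots> = trace S" by (simp add: permutes_id)
    finally show ?thesis .
  qed
  ultimately have "(F has_field_derivative trace S) (at 0)" by simp
  with dG FG show ?thesis using DERIV_unique by blast
qed


lemma wl_exists:
  fixes lam :: "'n::finite \<Rightarrow> real"
  assumes pos: "\<And>i. lam i > 0" and D: "0 < D" "D \<le> (\<Sum>i\<in>UNIV. lam i)"
  shows "water_level lam D > 0 \<and> (\<Sum>i\<in>UNIV. min (water_level lam D) (lam i)) = D"
proof -
  define f where "f L = (\<Sum>i\<in>UNIV. min L (lam i))" for L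
  define M where "M = Max (range lam)"
  have M: "lam i \<le> M" for i unfolding M_def by (intro Max_ge) auto
  have "M \<ge> 0" using M[of undefined] pos[of undefined] by linarith
  have f0: "f 0 = 0" using pos by (simp add: f_def min_def less_imp_le not_le)
  have fM: "f M = (\<Sum>i\<in>UNIV. lam i)" unfolding f_def using M by (intro sum.cong) (auto simp: min_def intro: order.antisym)
  have "continuous_on {0..M} f" unfolding f_def by (intro continuous_intros)
  then obtain L where L: "0 \<le> L" "L \<le> M" "f L = D"
    using IVT'[of f 0 D M] f0 fM D \<open>M \<ge> 0\<close> by auto
  with f0 D have "L \<noteq> 0" by auto
  with L have "\<exists>L. L > 0 \<and> (\<Sum>i\<in>UNIV. min L (lam i)) = D" unfolding f_def by (intro exI[of _ L]) auto
  then show ?thesis unfolding water_level_def by (rule someI_ex)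
qed


theorem theorem2:
  fixes b :: real and \<Sigma> :: "real^'n^'n" and lam :: "'n \<Rightarrow> real"
  assumes "b > 1"
    and "spd \<Sigma>"
    and "eigenvalues_of \<Sigma> lam"
  defines "lmin \<equiv> Min (range lam)"
    and "lmean \<equiv> trace \<Sigma> / real CARD('n)"
    and "a \<equiv> alpha_star b \<Sigma>"
  shows "((\<lambda>D. R_alpha b \<Sigma> a D - RD b lam D) \<longlongrightarrow> 0) (at_right 0)
       \<and> R_alpha b \<Sigma> a (trace \<Sigma>) = 0 \<and> RD b lam (trace \<Sigma>) = 0
       \<and> (\<forall>D \<in> {0<..trace \<Sigma>}.
           1/2 * log b (lmin / lmean) \<le> (R_alpha b \<Sigma> a D - RD b lam D) / real CARD('n)
         \<and> (R_alpha b \<Sigma> a D - RD b lam D) / real CARD('n) \<le> 1/2 * log b (2 - lmin / lmean))"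
proof -
  have pos: "lam i > 0" for i using eig_pos[OF assms(2,3)] .
  define n where "n = real CARD('n)"
  define tr where "tr = trace \<Sigma>"
  have n: "n > 0" unfolding n_def by simp
  have trs: "tr = (\<Sum>i\<in>UNIV. lam i)" unfolding tr_def using trace_eig[OF assms(3)] .
  have tr: "tr > 0" unfolding trs using pos by (simp add: sum_pos)
  have lb: "ln b > 0" using assms(1) by simp
  have lmin_le: "lmin \<le> lam i" for i unfolding lmin_def by (intro Min_le) auto
  obtain i0 where i0: "lam i0 = lmin"
  proof -
    have "lmin \<in> range lam" unfolding lmin_def by (intro Min_in) auto
    then show ?thesis using that by auto
  qed
  have lmin_pos: "lmin > 0" using i0 pos by metis
  have "n * lmin \<le> tr"
  proof -
    have "(\<Sum>i\<in>(UNIV::'n set). lmin) \<le> (\<Sum>i\<in>UNIV. lam i)" by (intro sum_mono lmin_le)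
    then show ?thesis by (simp add: trs n_def)
  qed
  define m where "m = tr / n"
  have m: "m > 0" unfolding m_def using tr n by simp
  have lmean: "lmean = m" unfolding lmean_def m_def tr_def n_def ..
  define r where "r = lmin / m"
  have r: "0 < r" "r \<le> 1" unfolding r_def m_def using lmin_pos \<open>n * lmin \<le> tr\<close> tr n
    by (auto simp: field_simps)
  have lr: "lam i / m \<ge> r" for i unfolding r_def using m lmin_le[of i] by (simp add: divide_right_mono)
  have detf: "det (\<alpha> *\<^sub>R mat 1 + (n / D) *\<^sub>R \<Sigma>) = (\<Prod>i\<in>UNIV. \<alpha> + (n / D) * lam i)"
    if "D > 0" for \<alpha> D using det_shift[OF assms(3)] that n by simp
  have Ra: "R_alpha b \<Sigma> \<alpha> D = (\<Sum>i\<in>UNIV. ln (\<alpha> + (n / D) * lam i)) / (2 * ln b)"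
    if "D > 0" "\<alpha> \<ge> 0" for \<alpha> D
  proof -
    have "ln (\<Prod>i\<in>UNIV. \<alpha> + (n / D) * lam i) = (\<Sum>i\<in>UNIV. ln (\<alpha> + (n / D) * lam i))"
    proof (intro ln_prod)
      fix i :: 'n
      have "0 < (n / D) * lam i" using that n pos by simp
      then show "\<alpha> + (n / D) * lam i \<noteq> 0" using that by linarith
    qed simp
    then show ?thesis unfolding R_alpha_def n_def[symmetric] detf[OF that(1)] log_def by simp
  qed
  define h where "h \<alpha> = (\<Sum>i\<in>UNIV. ln (\<alpha> + lam i / m))" for \<alpha>
  have Rtr: "R_alpha b \<Sigma> \<alpha> tr = h \<alpha> / (2 * ln b)" if "\<alpha> \<ge> 0" for \<alpha>
    unfolding Ra[OF tr that] h_def m_def by (simp add: mult.commute)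
  have hmono: "h \<alpha> < h \<beta>" if "0 \<le> \<alpha>" "\<alpha> < \<beta>" for \<alpha> \<beta>
    unfolding h_def
  proof (intro sum_strict_mono)
    fix i :: 'n
    have "0 < lam i / m" using pos m by simp
    then show "ln (\<alpha> + lam i / m) < ln (\<beta> + lam i / m)" using that by simp
  qed auto
  have h0: "h 0 \<le> 0"
  proof -
    have "h 0 \<le> (\<Sum>i\<in>UNIV. lam i / m - 1)" unfolding h_def
      using pos m by (intro sum_mono) (simp add: ln_le_minus_one)
    also have "\<dots> = tr / m - n" by (simp add: sum_subtractf trs sum_divide_distrib n_def)
    also have "\<dots> = 0" unfolding m_def using n tr by simp
    finally show ?thesis .
  qed
  have h1: "h (1 - r) \<ge> 0" unfolding h_def using lr by (intro sum_nonneg) simp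
  have lpos: "0 < lam i / m" for i using pos m by simp
  have "continuous_on {0..1-r} h" unfolding h_def using lpos
    by (intro continuous_intros) (smt (verit) atLeastAtMost_iff)
  then obtain a0 where a0: "0 \<le> a0" "a0 \<le> 1 - r" "h a0 = 0"
    using IVT'[of h 0 0 "1 - r"] h0 h1 r by auto
  have "a = a0"
    unfolding a_def alpha_star_def
  proof (rule the_equality)
    show "a0 \<in> {0..1} \<and> R_alpha b \<Sigma> a0 (trace \<Sigma>) = 0"
      using a0 r Rtr[of a0] unfolding tr_def by simp
  next
    fix \<alpha> assume "\<alpha> \<in> {0..1} \<and> R_alpha b \<Sigma> \<alpha> (trace \<Sigma>) = 0"
    then have "\<alpha> \<ge> 0" "h \<alpha> = 0" using Rtr[of \<alpha>] lb unfolding tr_def by auto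
    then show "\<alpha> = a0" using hmono[of \<alpha> a0] hmono[of a0 \<alpha>] a0 by (cases "\<alpha> < a0"; cases "a0 < \<alpha>") auto
  qed
  have a: "0 \<le> a" "a \<le> 1 - r" using a0 \<open>a = a0\<close> by auto
  have part2: "R_alpha b \<Sigma> a (trace \<Sigma>) = 0" using Rtr[of a] a0 \<open>a = a0\<close> unfolding tr_def by simp
  have diff: "R_alpha b \<Sigma> a D - RD b lam D =
      (\<Sum>i\<in>UNIV. ln ((a + (n / D) * lam i) * min (water_level lam D) (lam i) / lam i)) / (2 * ln b)"
    if D: "0 < D" "D \<le> tr" for D
  proof -
    define L where "L = water_level lam D"
    have L: "L > 0" using wl_exists[of lam D, OF pos D(1)] D trs unfolding L_def by auto
    have p1: "a + (n / D) * lam i > 0" for i using a n D pos by (auto intro!: add_nonneg_pos)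
    have p2: "min L (lam i) > 0" for i using L pos by simp
    have "RD b lam D = (\<Sum>i\<in>UNIV. ln (lam i / min L (lam i))) / (2 * ln b)"
      unfolding RD_def L_def[symmetric] log_def by (simp add: sum_divide_distrib)
    moreover have "ln ((a + (n / D) * lam i) * min L (lam i) / lam i)
        = ln (a + (n / D) * lam i) - ln (lam i / min L (lam i))" for i
      using p1[of i] p2[of i] pos[of i] by (simp add: ln_mult ln_div)
    ultimately show ?thesis unfolding Ra[OF D(1) a(1)] L_def[symmetric]
      by (simp add: sum_subtractf diff_divide_distrib)
  qed
  have wl: "water_level lam D > 0 \<and> (\<Sum>i\<in>UNIV. min (water_level lam D) (lam i)) = D"
    if "0 < D" "D \<le> tr" for D using wl_exists[of lam D, OF pos that(1)] that trs by auto
  have part3: "RD b lam (trace \<Sigma>) = 0"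
  proof -
    define L where "L = water_level lam tr"
    have eq: "min L (lam i) = lam i" for i
    proof (rule ccontr)
      assume "min L (lam i) \<noteq> lam i"
      then have "min L (lam i) < lam i" by simp
      then have "(\<Sum>i\<in>UNIV. min L (lam i)) < (\<Sum>i\<in>UNIV. lam i)"
        by (intro sum_strict_mono_ex1) auto
      with wl[OF tr order.refl] trs show False unfolding L_def by simp
    qed
    show ?thesis unfolding RD_def tr_def[symmetric] L_def[symmetric] eq using pos
      by (simp add: less_imp_neq[symmetric])
  qed
  have bounds: "1/2 * log b r \<le> (R_alpha b \<Sigma> a D - RD b lam D) / n
         \<and> (R_alpha b \<Sigma> a D - RD b lam D) / n \<le> 1/2 * log b (2 - r)"
    if D: "0 < D" "D \<le> tr" for D
  proof -
    define L where "L = water_level lam D"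
    define g where "g i = (a + (n / D) * lam i) * min L (lam i) / lam i" for i
    have L: "L > 0" "(\<Sum>i\<in>UNIV. min L (lam i)) = D" using wl[OF D] unfolding L_def by auto
    have dif: "R_alpha b \<Sigma> a D - RD b lam D = (\<Sum>i\<in>UNIV. ln (g i)) / (2 * ln b)"
      unfolding diff[OF D] g_def L_def ..
    have Dpos: "min L (lam i) > 0" for i using L pos by simp
    have gsplit: "g i = a * (min L (lam i) / lam i) + n * min L (lam i) / D" for i
      unfolding g_def using pos[of i] D by (simp add: field_simps)
    have glow: "g i \<ge> r" for i
    proof -
      have "a * (min L (lam i) / lam i) \<ge> 0" using a Dpos[of i] pos[of i] by simp
      moreover have "n * min L (lam i) / D \<ge> r"
      proof (cases "L \<le> lmin")
        case True
        then have "min L (lam j) = L" for j using lmin_le[of j] by simp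
        then have "D = n * L" using L(2) by (simp add: n_def)
        then have "n * min L (lam i) / D = 1" using \<open>min L (lam i) = L\<close> n L by simp
        then show ?thesis using r by linarith
      next
        case False
        then have "min L (lam i) \<ge> lmin" using lmin_le[of i] by simp
        have "r = n * lmin / tr" unfolding r_def m_def using n tr by simp
        also have "\<dots> \<le> n * min L (lam i) / tr"
          using \<open>min L (lam i) \<ge> lmin\<close> n tr by (simp add: divide_right_mono)
        also have "\<dots> \<le> n * min L (lam i) / D"
          using D n Dpos[of i] by (simp add: frac_le)
        finally show ?thesis .
      qed
      ultimately show ?thesis unfolding gsplit by linarith
    qed
    have gpos: "g i > 0" for i using glow[of i] r by linarith
    have s1: "n * ln r \<le> (\<Sum>i\<in>UNIV. ln (g i))"
    proof -
      have "(\<Sum>i\<in>(UNIV::'n set). ln r) \<le> (\<Sum>i\<in>UNIV. ln (g i))"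
        using glow r by (intro sum_mono ln_mono) auto
      then show ?thesis by (simp add: n_def)
    qed
    have gsum: "(\<Sum>i\<in>UNIV. g i) \<le> n * (1 + a)"
    proof -
      have "(\<Sum>i\<in>UNIV. g i) = a * (\<Sum>i\<in>UNIV. min L (lam i) / lam i) + n * (\<Sum>i\<in>UNIV. min L (lam i)) / D"
        unfolding gsplit by (simp add: sum.distrib sum_distrib_left sum_divide_distrib)
      also have "\<dots> = a * (\<Sum>i\<in>UNIV. min L (lam i) / lam i) + n" using L(2) D by simp
      also have "\<dots> \<le> a * (\<Sum>i\<in>(UNIV::'n set). 1) + n"
        using a pos by (intro add_right_mono mult_left_mono sum_mono) auto
      finally show ?thesis by (simp add: n_def algebra_simps)
    qed
    have s2: "(\<Sum>i\<in>UNIV. ln (g i)) \<le> n * ln (2 - r)"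
    proof -
      have a1: "1 + a > 0" using a by simp
      have "ln (g i) \<le> ln (1 + a) + (g i / (1 + a) - 1)" for i
      proof -
        have "ln (g i / (1 + a)) \<le> g i / (1 + a) - 1" using gpos[of i] a1 by (intro ln_le_minus_one) simp
        then show ?thesis using gpos[of i] a1 by (simp add: ln_div)
      qed
      then have "(\<Sum>i\<in>UNIV. ln (g i)) \<le> (\<Sum>i\<in>UNIV. ln (1 + a) + (g i / (1 + a) - 1))"
        by (intro sum_mono)
      also have "\<dots> = n * ln (1 + a) + ((\<Sum>i\<in>UNIV. g i) / (1 + a) - n)"
        by (simp add: sum.distrib sum_subtractf sum_divide_distrib n_def)
      also have "\<dots> \<le> n * ln (1 + a)"
        using gsum a1 by (simp add: divide_le_eq mult.commute)
      also have "\<dots> \<le> n * ln (2 - r)"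
        using a n a1 by (intro mult_left_mono) auto
      finally show ?thesis .
    qed
    show ?thesis unfolding dif log_def using s1 s2 n lb
      by (auto simp: field_simps)
  qed
  have lim: "((\<lambda>D. R_alpha b \<Sigma> a D - RD b lam D) \<longlongrightarrow> 0) (at_right 0)"
  proof -
    have ev: "\<forall>\<^sub>F D in at_right 0. (\<Sum>i\<in>UNIV. ln (a * D / (n * lam i) + 1)) / (2 * ln b)
        = R_alpha b \<Sigma> a D - RD b lam D"
      unfolding eventually_at_right_field
    proof (intro exI[of _ "n * lmin"] conjI allI impI)
      show "0 < n * lmin" using n lmin_pos by simp
      fix D :: real assume D: "0 < D" "D < n * lmin"
      then have D': "0 < D" "D \<le> tr" using \<open>n * lmin \<le> tr\<close> by auto
      define L where "L = water_level lam D"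
      have L: "L > 0" "(\<Sum>i\<in>UNIV. min L (lam i)) = D" using wl[OF D'] unfolding L_def by auto
      have "L < lmin"
      proof (rule ccontr)
        assume "\<not> L < lmin"
        then have "lmin \<le> min L (lam i)" for i using lmin_le[of i] by simp
        then have "(\<Sum>i\<in>(UNIV::'n set). lmin) \<le> (\<Sum>i\<in>UNIV. min L (lam i))" by (intro sum_mono)
        with L(2) D show False by (simp add: n_def)
      qed
      then have mL: "min L (lam i) = L" for i using lmin_le[of i] by simp
      then have "D = n * L" using L(2) by (simp add: n_def)
      have "ln ((a + (n / D) * lam i) * min L (lam i) / lam i) = ln (a * D / (n * lam i) + 1)" for i
      proof -
        have "(a + (n / D) * lam i) * min L (lam i) / lam i = a * D / (n * lam i) + 1"
          unfolding mL \<open>D = n * L\<close> using pos[of i] n L by (simp add: field_simps)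
        then show ?thesis by simp
      qed
      then show "(\<Sum>i\<in>UNIV. ln (a * D / (n * lam i) + 1)) / (2 * ln b)
        = R_alpha b \<Sigma> a D - RD b lam D"
        unfolding diff[OF D'] L_def by simp
    qed
    have "((\<lambda>D. (\<Sum>i\<in>UNIV. ln (a * D / (n * lam i) + 1)) / (2 * ln b)) \<longlongrightarrow>
        (\<Sum>i\<in>(UNIV::'n set). ln (a * 0 / (n * lam i) + 1)) / (2 * ln b)) (at_right 0)"
      using n pos lb by (intro tendsto_intros) (auto simp: less_imp_neq[symmetric])
    then have "((\<lambda>D. (\<Sum>i\<in>UNIV. ln (a * D / (n * lam i) + 1)) / (2 * ln b)) \<longlongrightarrow> 0) (at_right 0)"
      by simp
    then show ?thesis using ev by (rule Lim_transform_eventually)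
  qed
  show ?thesis
    using lim part2 part3 bounds lmean unfolding r_def n_def[symmetric] tr_def[symmetric]
    by auto
qed

end
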